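(* Let $n\ge2$, let $v\in C^0(\mathbb R^n)$ be quasi-concave, and suppose $v\in C^\infty(U)$ for some domain $U\subset\mathbb R^n$. Then at every point of $U$, $$2\big[|D^2v\,Dv|^2-\Delta v\,\Delta_\infty v\big]\ \ge\ |Dv|^2\big[|D^2v|^2-(\Delta v)^2\big],$$ where $\Delta_\infty v=\langle D^2v\,Dv,Dv\rangle$ and $|D^2v|$ is the Frobenius norm.
   Context: A function $f\in C^0(\mathbb R^n)$ is quasi-concave if $f(\lambda x+(1-\lambda)y)\ge\min\{f(x),f(y)\}$ for all $x,y\in\mathbb R^n$, $\lambda\in[0,1]$; equivalently, every nonempty super level set $\{f>t\}$ is convex. *)

theory Defs
  imports "HOL-Analysis.Analysis"
begin

definition quasi_concave :: "(real^'n \<Rightarrow> real) \<Rightarrow> bool" where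
  "quasi_concave f \<longleftrightarrow>
     (\<forall>x y. \<forall>l::real. 0 \<le> l \<and> l \<le> 1 \<longrightarrow> f (l *\<^sub>R x + (1 - l) *\<^sub>R y) \<ge> min (f x) (f y))"

definition pd :: "'n \<Rightarrow> (real^'n \<Rightarrow> real) \<Rightarrow> real^'n \<Rightarrow> real" where
  "pd i f x = deriv (\<lambda>t. f (x + t *\<^sub>R axis i 1)) 0"

fun Ck_on :: "nat \<Rightarrow> (real^'n) set \<Rightarrow> (real^'n \<Rightarrow> real) \<Rightarrow> bool" where
  "Ck_on 0 U f = continuous_on U f"
| "Ck_on (Suc k) U f = (f differentiable_on U \<and> (\<forall>i. Ck_on k U (pd i f)))"

definition smooth_on :: "(real^'n) set \<Rightarrow> (real^'n \<Rightarrow> real) \<Rightarrow> bool" where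
  "smooth_on U f \<longleftrightarrow> (\<forall>k. Ck_on k U f)"

definition grad :: "(real^'n \<Rightarrow> real) \<Rightarrow> real^'n \<Rightarrow> real^'n" where
  "grad f x = (\<chi> i. pd i f x)"

definition hess :: "(real^'n \<Rightarrow> real) \<Rightarrow> real^'n \<Rightarrow> real^'n^'n" where
  "hess f x = (\<chi> i j. pd j (pd i f) x)"

definition laplacian :: "(real^'n \<Rightarrow> real) \<Rightarrow> real^'n \<Rightarrow> real" where
  "laplacian f x = (\<Sum>i\<in>UNIV. hess f x $ i $ i)"

definition inf_laplacian :: "(real^'n \<Rightarrow> real) \<Rightarrow> real^'n \<Rightarrow> real" where
  "inf_laplacian f x = (hess f x *v grad f x) \<bullet> grad f x"

definition frob_norm_sq :: "real^'n^'n \<Rightarrow> real" where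
  "frob_norm_sq A = (\<Sum>i\<in>UNIV. \<Sum>j\<in>UNIV. (A $ i $ j)\<^sup>2)"

end

theory Submission
  imports Defs
begin


lemma pd_of_deriv:
  fixes f :: "real^'n \<Rightarrow> real"
  assumes "(f has_derivative D) (at y)"
  shows "pd i f y = D (axis i 1)"
proof -
  have lin: "linear D" using assms has_derivative_linear by blast
  have g: "((\<lambda>t::real. y + t *\<^sub>R axis i 1) has_derivative (\<lambda>t. t *\<^sub>R axis i 1)) (at 0)"
    by (auto intro!: derivative_eq_intros)
  have "((f \<circ> (\<lambda>t::real. y + t *\<^sub>R axis i 1)) has_derivative (D \<circ> (\<lambda>t. t *\<^sub>R axis i 1))) (at 0)"
    by (rule diff_chain_at[OF g]) (simp add: assms)
  then have "((\<lambda>t. f (y + t *\<^sub>R axis i 1)) has_field_derivative D (axis i 1)) (at 0)"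
    unfolding o_def by (rule has_derivative_imp_has_field_derivative) (simp add: linear_cmul[OF lin])
  then show ?thesis unfolding pd_def by (rule DERIV_imp_deriv)
qed

lemma deriv_as_sum:
  fixes f :: "real^'n \<Rightarrow> real"
  assumes "(f has_derivative D) (at y)"
  shows "D h = (\<Sum>k\<in>UNIV. h$k * pd k f y)"
proof -
  have lin: "linear D" using assms has_derivative_linear by blast
  have "D h = D (\<Sum>k\<in>UNIV. h$k *\<^sub>R axis k 1)"
    using basis_expansion[of h] by (simp add: scalar_mult_eq_scaleR)
  also have "\<dots> = (\<Sum>k\<in>UNIV. h$k * D (axis k 1))"
    by (simp add: linear_sum[OF lin] linear_cmul[OF lin])
  finally show ?thesis by (simp add: pd_of_deriv[OF assms])
qed

lemma has_derivative_pd: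
  fixes f :: "real^'n \<Rightarrow> real"
  assumes "f differentiable (at y)"
  shows "(f has_derivative (\<lambda>h. \<Sum>k\<in>UNIV. h$k * pd k f y)) (at y)"
proof -
  obtain D where D: "(f has_derivative D) (at y)" using assms differentiable_def by blast
  have "D = (\<lambda>h. \<Sum>k\<in>UNIV. h$k * pd k f y)" using deriv_as_sum[OF D] by auto
  with D show ?thesis by simp
qed

lemma diff_on_open_at:
  assumes "f differentiable_on U" "open U" "y \<in> U"
  shows "f differentiable (at y)"
  using assms by (metis at_within_open differentiable_on_def)

lemma line_deriv:
  fixes f :: "real^'n \<Rightarrow> real"
  assumes "f differentiable (at (y + t *\<^sub>R w))"
  shows "((\<lambda>s. f (y + s *\<^sub>R w)) has_real_derivative (\<Sum>k\<in>UNIV. w$k * pd k f (y + t *\<^sub>R w))) (at t)"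
proof -
  have g: "((\<lambda>s::real. y + s *\<^sub>R w) has_derivative (\<lambda>s. s *\<^sub>R w)) (at t)"
    by (auto intro!: derivative_eq_intros)
  have "((f \<circ> (\<lambda>s::real. y + s *\<^sub>R w)) has_derivative ((\<lambda>h. \<Sum>k\<in>UNIV. h$k * pd k f (y + t *\<^sub>R w)) \<circ> (\<lambda>s. s *\<^sub>R w))) (at t)"
    by (rule diff_chain_at[OF g]) (simp add: has_derivative_pd assms)
  then show ?thesis unfolding o_def
    by (rule has_derivative_imp_has_field_derivative) (simp add: sum_distrib_left mult.assoc)
qed



lemma sum_axis: "(\<Sum>k\<in>UNIV. (axis i (1::real)) $ k * g k) = g i"
proof -
  have "\<And>k. (axis i (1::real)) $ k * g k = (if k = i then g k else 0)" by (simp add: axis_def)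
  then show ?thesis by simp
qed

lemma ball_add_in:
  fixes x z :: "'a::real_normed_vector"
  assumes "norm z < r" "ball x r \<subseteq> U" shows "x + z \<in> U"
proof -
  have "x + z \<in> ball x r" using assms(1) by (simp add: dist_norm)
  then show ?thesis using assms(2) by blast
qed

lemma young_half:
  fixes f :: "real^'n \<Rightarrow> real"
  assumes U: "open U" "x \<in> U" and df: "\<forall>y\<in>U. f differentiable (at y)"
    and di: "pd i f differentiable (at x)" and e: "e > 0"
  shows "\<exists>d>0. \<forall>h. 0 < h \<and> h < d \<longrightarrow>
     \<bar>(f (x + h *\<^sub>R axis i 1 + h *\<^sub>R axis j 1) - f (x + h *\<^sub>R axis i 1) - f (x + h *\<^sub>R axis j 1) + f x)
       - h\<^sup>2 * pd j (pd i f) x\<bar> \<le> 3 * e * h\<^sup>2"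
proof -
  obtain r where r: "r > 0" "ball x r \<subseteq> U" using U open_contains_ball by blast
  let ?L = "\<lambda>z. \<Sum>k\<in>UNIV. z$k * pd k (pd i f) x"
  have "(pd i f has_derivative ?L) (at x)" by (rule has_derivative_pd[OF di])
  then have "\<exists>d>0. \<forall>y. norm (y - x) < d \<longrightarrow> \<bar>pd i f y - pd i f x - ?L (y - x)\<bar> \<le> e * norm (y - x)"
    using e unfolding has_derivative_at_alt real_norm_def by blast
  then obtain d0 where d0: "d0 > 0" and
    rem: "\<And>y. norm (y - x) < d0 \<Longrightarrow> \<bar>pd i f y - pd i f x - ?L (y - x)\<bar> \<le> e * norm (y - x)"
    by blast
  define d where "d = min d0 r / 2"
  have dpos: "d > 0" using d0 r by (simp add: d_def)
  show ?thesis
  proof (intro exI[of _ d] conjI allI impI dpos)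
    fix h :: real assume h: "0 < h \<and> h < d"
    have hd0: "2*h < d0" and hr: "2*h < r" using h d0 r unfolding d_def by auto
    let ?ei = "axis i (1::real) :: real^'n" and ?ej = "axis j (1::real) :: real^'n"
    have nz: "norm (h *\<^sub>R ?ej + s *\<^sub>R ?ei) \<le> h + s" if "0 \<le> s" for s
      using norm_triangle_ineq[of "h *\<^sub>R ?ej" "s *\<^sub>R ?ei"] h that by simp
    have inU: "x + h *\<^sub>R ?ej + s *\<^sub>R ?ei \<in> U" "x + s *\<^sub>R ?ei \<in> U" if "0 \<le> s" "s \<le> h" for s
    proof -
      have "norm (h *\<^sub>R ?ej + s *\<^sub>R ?ei) < r" using nz[OF that(1)] that hr by linarith
      then show "x + h *\<^sub>R ?ej + s *\<^sub>R ?ei \<in> U" using r ball_add_in by (metis add.assoc)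
      have "norm (s *\<^sub>R ?ei) < r" using that hr by simp
      then show "x + s *\<^sub>R ?ei \<in> U" using r ball_add_in by metis
    qed
    define \<phi> where "\<phi> s = f (x + h *\<^sub>R ?ej + s *\<^sub>R ?ei) - f (x + s *\<^sub>R ?ei)" for s
    have der: "(\<phi> has_real_derivative (pd i f (x + h *\<^sub>R ?ej + s *\<^sub>R ?ei) - pd i f (x + s *\<^sub>R ?ei))) (at s)"
      if "0 \<le> s" "s \<le> h" for s
    proof -
      have 1: "((\<lambda>s. f (x + h *\<^sub>R ?ej + s *\<^sub>R ?ei)) has_real_derivative
         pd i f (x + h *\<^sub>R ?ej + s *\<^sub>R ?ei)) (at s)"
        using line_deriv[of f "x + h *\<^sub>R ?ej" s ?ei] df inU[OF that] by (simp add: sum_axis)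
      have 2: "((\<lambda>s. f (x + s *\<^sub>R ?ei)) has_real_derivative pd i f (x + s *\<^sub>R ?ei)) (at s)"
        using line_deriv[of f x s ?ei] df inU[OF that] by (simp add: sum_axis)
      show ?thesis unfolding \<phi>_def by (rule DERIV_diff[OF 1 2])
    qed
    obtain \<xi> where xi: "0 < \<xi>" "\<xi> < h" and mvt:
      "\<phi> h - \<phi> 0 = (h - 0) * (pd i f (x + h *\<^sub>R ?ej + \<xi> *\<^sub>R ?ei) - pd i f (x + \<xi> *\<^sub>R ?ei))"
      using MVT2[of 0 h \<phi>, OF _ der] h by auto
    have G: "\<phi> h - \<phi> 0 = f (x + h *\<^sub>R ?ei + h *\<^sub>R ?ej) - f (x + h *\<^sub>R ?ei) - f (x + h *\<^sub>R ?ej) + f x"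
    proof -
      have "x + h *\<^sub>R ?ej + h *\<^sub>R ?ei = x + h *\<^sub>R ?ei + h *\<^sub>R ?ej" by (simp add: add_ac)
      then have "\<phi> h = f (x + h *\<^sub>R ?ei + h *\<^sub>R ?ej) - f (x + h *\<^sub>R ?ei)"
        by (simp only: \<phi>_def)
      moreover have "\<phi> 0 = f (x + h *\<^sub>R ?ej) - f x" by (simp add: \<phi>_def)
      ultimately show ?thesis by linarith
    qed
    define z1 where "z1 = h *\<^sub>R ?ej + \<xi> *\<^sub>R ?ei"
    define z2 where "z2 = \<xi> *\<^sub>R ?ei"
    have n1: "norm z1 \<le> h + \<xi>" using nz[of \<xi>] xi by (simp add: z1_def)
    have n2: "norm z2 = \<xi>" using xi by (simp add: z2_def)
    have dd: "h + \<xi> < d0" using hd0 xi by linarith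
    have r1: "\<bar>pd i f (x + z1) - pd i f x - ?L z1\<bar> \<le> e * norm z1"
      using rem[of "x + z1"] n1 dd by simp
    have r2: "\<bar>pd i f (x + z2) - pd i f x - ?L z2\<bar> \<le> e * norm z2"
      using rem[of "x + z2"] n2 dd xi by simp
    have Ld: "?L z1 - ?L z2 = h * pd j (pd i f) x"
    proof -
      have "?L z1 - ?L z2 = (\<Sum>k\<in>UNIV. h * (?ej $ k * pd k (pd i f) x))"
        by (simp add: z1_def z2_def sum_subtractf[symmetric] algebra_simps)
      also have "\<dots> = h * pd j (pd i f) x" by (simp add: sum_distrib_left[symmetric] sum_axis)
      finally show ?thesis .
    qed
    have "\<bar>(pd i f (x + z1) - pd i f (x + z2)) - h * pd j (pd i f) x\<bar> \<le> e * norm z1 + e * norm z2"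
      using r1 r2 Ld by linarith
    also have "\<dots> \<le> 3 * e * h"
    proof -
      have "e * norm z1 \<le> e * (h + \<xi>)" using n1 e by (simp add: mult_left_mono)
      moreover have "e * \<xi> \<le> e * h" using xi e by (simp add: mult_left_mono)
      ultimately show ?thesis using n2 by (simp add: algebra_simps)
    qed
    finally have B: "\<bar>(pd i f (x + z1) - pd i f (x + z2)) - h * pd j (pd i f) x\<bar> \<le> 3 * e * h" .
    have "\<bar>(\<phi> h - \<phi> 0) - h\<^sup>2 * pd j (pd i f) x\<bar>
        = h * \<bar>(pd i f (x + z1) - pd i f (x + z2)) - h * pd j (pd i f) x\<bar>"
    proof -
      have "(\<phi> h - \<phi> 0) - h\<^sup>2 * pd j (pd i f) x
          = h * ((pd i f (x + z1) - pd i f (x + z2)) - h * pd j (pd i f) x)"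
        using mvt by (simp add: z1_def z2_def add.assoc power2_eq_square right_diff_distrib)
      then show ?thesis using h by (simp add: abs_mult)
    qed
    also have "\<dots> \<le> h * (3 * e * h)" using B h by (simp add: mult_left_mono)
    finally show "\<bar>(f (x + h *\<^sub>R ?ei + h *\<^sub>R ?ej) - f (x + h *\<^sub>R ?ei) - f (x + h *\<^sub>R ?ej) + f x)
       - h\<^sup>2 * pd j (pd i f) x\<bar> \<le> 3 * e * h\<^sup>2" using G by (simp add: power2_eq_square mult_ac)
  qed
qed



lemma young:
  fixes f :: "real^'n \<Rightarrow> real"
  assumes U: "open U" "x \<in> U" and df: "\<forall>y\<in>U. f differentiable (at y)"
    and di: "pd i f differentiable (at x)" and dj: "pd j f differentiable (at x)"
  shows "pd j (pd i f) x = pd i (pd j f) x"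
proof (rule ccontr)
  let ?a = "pd j (pd i f) x" and ?b = "pd i (pd j f) x"
  assume ne: "?a \<noteq> ?b"
  define e where "e = \<bar>?a - ?b\<bar> / 12"
  have e: "e > 0" using ne by (simp add: e_def)
  obtain d1 where d1: "d1 > 0" and H1: "\<forall>h. 0 < h \<and> h < d1 \<longrightarrow>
     \<bar>(f (x + h *\<^sub>R axis i 1 + h *\<^sub>R axis j 1) - f (x + h *\<^sub>R axis i 1) - f (x + h *\<^sub>R axis j 1) + f x)
       - h\<^sup>2 * ?a\<bar> \<le> 3 * e * h\<^sup>2"
    using young_half[OF U df di e, of j] by blast
  obtain d2 where d2: "d2 > 0" and H2: "\<forall>h. 0 < h \<and> h < d2 \<longrightarrow>
     \<bar>(f (x + h *\<^sub>R axis j 1 + h *\<^sub>R axis i 1) - f (x + h *\<^sub>R axis j 1) - f (x + h *\<^sub>R axis i 1) + f x)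
       - h\<^sup>2 * ?b\<bar> \<le> 3 * e * h\<^sup>2"
    using young_half[OF U df dj e, of i] by blast
  define h where "h = min d1 d2 / 2"
  have h: "0 < h" "h < d1" "h < d2" using d1 d2 by (auto simp: h_def)
  have sw: "x + h *\<^sub>R axis j 1 + h *\<^sub>R axis i 1 = x + h *\<^sub>R axis i 1 + h *\<^sub>R axis j (1::real)"
    by (simp add: add_ac)
  have A1: "\<bar>(f (x + h *\<^sub>R axis i 1 + h *\<^sub>R axis j 1) - f (x + h *\<^sub>R axis i 1) - f (x + h *\<^sub>R axis j 1) + f x)
       - h\<^sup>2 * ?a\<bar> \<le> 3 * e * h\<^sup>2" using H1 h by blast
  have A2: "\<bar>(f (x + h *\<^sub>R axis i 1 + h *\<^sub>R axis j 1) - f (x + h *\<^sub>R axis j 1) - f (x + h *\<^sub>R axis i 1) + f x)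
       - h\<^sup>2 * ?b\<bar> \<le> 3 * e * h\<^sup>2" using H2 h sw by metis
  have "h\<^sup>2 * \<bar>?a - ?b\<bar> = \<bar>h\<^sup>2 * ?a - h\<^sup>2 * ?b\<bar>" by (simp add: abs_mult right_diff_distrib[symmetric])
  also have "\<dots> \<le> 6 * e * h\<^sup>2" using A1 A2 by linarith
  also have "\<dots> = h\<^sup>2 * (\<bar>?a - ?b\<bar> / 2)" by (simp add: e_def)
  finally have "\<bar>?a - ?b\<bar> \<le> \<bar>?a - ?b\<bar> / 2" using h by simp
  then show False using ne by simp
qed



lemma nsd:
  fixes v :: "real^'n \<Rightarrow> real"
  assumes qc: "quasi_concave v" and U: "open U" "x \<in> U"
    and dv: "\<forall>y\<in>U. v differentiable (at y)" and dpv: "\<forall>i. pd i v differentiable (at x)"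
    and orth: "grad v x \<bullet> w = 0"
  shows "(\<Sum>i\<in>UNIV. \<Sum>j\<in>UNIV. w$i * w$j * hess v x $ i $ j) \<le> 0"
proof (rule ccontr)
  define Q where "Q = (\<Sum>i\<in>UNIV. \<Sum>j\<in>UNIV. w$i * w$j * hess v x $ i $ j)"
  assume "\<not> ?thesis"
  then have Q: "Q > 0" by (simp add: Q_def)
  define g where "g t = (\<Sum>i\<in>UNIV. w$i * pd i v (x + t *\<^sub>R w))" for t
  define hh where "hh t = v (x + t *\<^sub>R w)" for t
  have g0: "g 0 = 0" using orth by (simp add: g_def grad_def inner_vec_def mult.commute)
  have dh: "(hh has_real_derivative g t) (at t)" if "x + t *\<^sub>R w \<in> U" for t
    using line_deriv[of v x t w] dv that unfolding hh_def g_def by (simp add: mult.commute)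
  have dg: "(g has_real_derivative Q) (at 0)"
  proof -
    have "((\<lambda>t. pd i v (x + t *\<^sub>R w)) has_real_derivative (\<Sum>j\<in>UNIV. w$j * pd j (pd i v) x)) (at 0)" for i
      using line_deriv[of "pd i v" x 0 w] dpv by simp
    then have "((\<lambda>t. \<Sum>i\<in>UNIV. w$i * pd i v (x + t *\<^sub>R w)) has_real_derivative
        (\<Sum>i\<in>UNIV. w$i * (\<Sum>j\<in>UNIV. w$j * pd j (pd i v) x))) (at 0)"
      by (intro DERIV_sum DERIV_cmult) auto
    moreover have "(\<Sum>i\<in>UNIV. w$i * (\<Sum>j\<in>UNIV. w$j * pd j (pd i v) x)) = Q"
      by (simp add: Q_def hess_def sum_distrib_left mult.assoc)
    ultimately show ?thesis unfolding g_def by simp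
  qed
  then have "((\<lambda>t. (g t - g 0) / (t - 0)) \<longlongrightarrow> Q) (at 0)"
    using has_field_derivative_iff by blast
  then have "eventually (\<lambda>t. 0 < (g t - g 0) / (t - 0)) (at 0)"
    using Q order_tendstoD(1) by blast
  then obtain d where d: "d > 0" and dq: "\<And>t. t \<noteq> 0 \<Longrightarrow> dist t 0 < d \<Longrightarrow> 0 < g t / t"
    unfolding eventually_at using g0 by auto
  obtain r where r: "r > 0" "ball x r \<subseteq> U" using U open_contains_ball by blast
  define t0 where "t0 = min d (r / (norm w + 1)) / 2"
  have nw: "0 < norm w + 1" by (simp add: add_nonneg_pos)
  define R where "R = r / (norm w + 1)"
  have rp: "0 < R" using r nw by (simp add: R_def)
  define t0 where "t0 = min d R / 2"
  have t0: "0 < t0" "t0 < d" "t0 < R" using d rp by (auto simp: t0_def)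
  have inU: "x + t *\<^sub>R w \<in> U" if "\<bar>t\<bar> \<le> t0" for t
  proof -
    have "t0 * (norm w + 1) < r" using t0(3) nw by (simp add: R_def pos_less_divide_eq)
    moreover have "\<bar>t\<bar> * norm w \<le> t0 * (norm w + 1)"
      using that t0 by (smt (verit) mult_mono norm_ge_zero)
    ultimately have "norm (t *\<^sub>R w) < r" by simp
    then show ?thesis using r ball_add_in by blast
  qed
  obtain z1 where z1: "0 < z1" "z1 < t0" and m1: "hh t0 - hh 0 = (t0 - 0) * g z1"
    using MVT2[of 0 t0 hh g] t0 dh inU by auto
  obtain z2 where z2: "- t0 < z2" "z2 < 0" and m2: "hh 0 - hh (- t0) = (0 - (- t0)) * g z2"
    using MVT2[of "- t0" 0 hh g] t0 dh inU by auto
  have "0 < g z1 / z1" using dq[of z1] z1 t0 by simp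
  then have "g z1 > 0" using z1 by (simp add: zero_less_divide_iff)
  then have "t0 * g z1 > 0" using t0 by simp
  then have h1: "hh t0 > hh 0" using m1 by simp
  have "0 < g z2 / z2" using dq[of z2] z2 t0 by simp
  then have "g z2 < 0" using z2 by (simp add: zero_less_divide_iff)
  then have "t0 * g z2 < 0" using t0 by (simp add: mult_pos_neg)
  then have h2: "hh (- t0) > hh 0" using m2 by simp
  have mid: "(1/2::real) *\<^sub>R (x + t0 *\<^sub>R w) + (1 - 1/2) *\<^sub>R (x + (- t0) *\<^sub>R w) = x"
    by (simp add: algebra_simps scaleR_left_distrib[symmetric])
  have "v x \<ge> min (v (x + t0 *\<^sub>R w)) (v (x + (- t0) *\<^sub>R w))"
  proof -
    have "min (v (x + t0 *\<^sub>R w)) (v (x + (- t0) *\<^sub>R w)) \<le>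
       v ((1/2::real) *\<^sub>R (x + t0 *\<^sub>R w) + (1 - 1/2) *\<^sub>R (x + (- t0) *\<^sub>R w))"
    proof -
      have qc': "\<And>a b l. 0 \<le> l \<Longrightarrow> l \<le> 1 \<Longrightarrow> min (v a) (v b) \<le> v (l *\<^sub>R a + (1 - l) *\<^sub>R b)"
        using qc unfolding quasi_concave_def by blast
      show ?thesis by (rule qc') simp_all
    qed
    then show ?thesis unfolding mid .
  qed
  then show False using h1 h2 unfolding hh_def by simp
qed



lemma bf_sym:
  fixes A :: "real^'n^'n"
  assumes sym: "\<And>i j. A$i$j = A$j$i"
  shows "u \<bullet> (A *v z) = z \<bullet> (A *v u)"
proof -
  have "u \<bullet> (A *v z) = (\<Sum>k\<in>UNIV. \<Sum>l\<in>UNIV. u$k * A$k$l * z$l)"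
    by (simp add: inner_vec_def matrix_vector_mult_def sum_distrib_left mult_ac)
  also have "\<dots> = (\<Sum>l\<in>UNIV. \<Sum>k\<in>UNIV. u$k * A$k$l * z$l)" by (rule sum.swap)
  also have "\<dots> = z \<bullet> (A *v u)"
    by (simp add: inner_vec_def matrix_vector_mult_def sum_distrib_left mult_ac sym)
  finally show ?thesis .
qed

lemma qf_eq:
  fixes A :: "real^'n^'n"
  shows "(\<Sum>i\<in>UNIV. \<Sum>j\<in>UNIV. w$i * w$j * A$i$j) = w \<bullet> (A *v w)"
  by (simp add: inner_vec_def matrix_vector_mult_def sum_distrib_left mult_ac)

lemma quad2:
  fixes a b c :: real
  assumes H: "\<And>\<alpha> \<beta>. \<alpha>\<^sup>2*a + 2*\<alpha>*\<beta>*b + \<beta>\<^sup>2*c \<le> 0"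
  shows "a \<le> 0" "b\<^sup>2 \<le> a*c"
proof -
  show a: "a \<le> 0" using H[of 1 0] by simp
  show "b\<^sup>2 \<le> a*c"
  proof (cases "a = 0")
    case True
    show ?thesis
    proof (rule ccontr)
      assume "\<not> ?thesis"
      then have b: "b \<noteq> 0" using True by simp
      have "((1 - c)/(2*b))\<^sup>2*a + 2*((1 - c)/(2*b))*1*b + 1\<^sup>2*c \<le> 0" by (rule H)
      then show False using True b by (simp add: field_simps)
    qed
  next
    case False
    then have an: "a < 0" using a by simp
    have "b\<^sup>2*a + 2*b*(-a)*b + (-a)\<^sup>2*c \<le> 0" by (rule H)
    then have "a * (a*c - b\<^sup>2) \<le> 0" by (simp add: power2_eq_square algebra_simps)
    then show ?thesis using an by (simp add: mult_le_0_iff)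
  qed
qed

lemma qf_comb:
  fixes A :: "real^'n^'n"
  assumes sym: "\<And>i j. A$i$j = A$j$i"
  shows "(\<alpha> *\<^sub>R u + \<beta> *\<^sub>R z) \<bullet> (A *v (\<alpha> *\<^sub>R u + \<beta> *\<^sub>R z))
     = \<alpha>\<^sup>2 * (u \<bullet> (A *v u)) + 2*\<alpha>*\<beta>*(u \<bullet> (A *v z)) + \<beta>\<^sup>2 * (z \<bullet> (A *v z))"
  using bf_sym[OF sym, of z u]
  by (simp add: matrix_vector_right_distrib matrix_vector_mult_scaleR inner_add_left inner_add_right
      power2_eq_square algebra_simps)



lemma dsum: "(\<Sum>i\<in>UNIV. \<Sum>j\<in>UNIV. (K::real) * (f i * g j)) = K * ((\<Sum>i\<in>UNIV. f i) * (\<Sum>j\<in>UNIV. g j))"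
  by (simp add: sum_distrib_left[symmetric] sum_distrib_right[symmetric])

lemma alg_main:
  fixes A :: "real^'n^'n" and p :: "real^'n"
  assumes sym: "\<And>i j. A$i$j = A$j$i"
    and nsd: "\<And>w. p \<bullet> w = 0 \<Longrightarrow> w \<bullet> (A *v w) \<le> 0"
  shows "2 * ((norm (A *v p))\<^sup>2 - (\<Sum>i\<in>UNIV. A$i$i) * ((A *v p) \<bullet> p))
     \<ge> (norm p)\<^sup>2 * ((\<Sum>i\<in>UNIV. \<Sum>j\<in>UNIV. (A$i$j)\<^sup>2) - (\<Sum>i\<in>UNIV. A$i$i)\<^sup>2)"
proof -
  define q where "q = A *v p"
  define s where "s = p \<bullet> p"
  define c where "c = p \<bullet> q"
  define N where "N = q \<bullet> q"
  define t where "t = (\<Sum>i\<in>UNIV. A$i$i)"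
  define F where "F = (\<Sum>i\<in>UNIV. \<Sum>j\<in>UNIV. (A$i$j)\<^sup>2)"
  define W where "W i = s *\<^sub>R axis i 1 - p$i *\<^sub>R p" for i
  define M where "M i j = W i \<bullet> (A *v W j)" for i j
  have s_sum: "s = (\<Sum>i\<in>UNIV. (p$i)\<^sup>2)" by (simp add: s_def inner_vec_def power2_eq_square)
  have N_sum: "N = (\<Sum>i\<in>UNIV. (q$i)\<^sup>2)" by (simp add: N_def inner_vec_def power2_eq_square)
  have c_sum: "c = (\<Sum>i\<in>UNIV. p$i * q$i)" by (simp add: c_def inner_vec_def)
  have q_row: "(\<Sum>j\<in>UNIV. A$i$j * p$j) = q$i" for i by (simp add: q_def matrix_vector_mult_def)
  have q_col: "(\<Sum>i\<in>UNIV. A$i$j * p$i) = q$j" for j using q_row[of j] by (simp add: sym)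
  have Wp: "p \<bullet> W i = 0" for i by (simp add: W_def s_def inner_axis inner_diff_right mult.commute)
  have Aij: "axis i 1 \<bullet> (A *v axis j 1) = A$i$j" for i j
    by (simp add: inner_axis' matrix_vector_mul_component inner_axis)
  have pAj: "p \<bullet> (A *v axis j 1) = q$j" for j
    using bf_sym[OF sym, of p "axis j 1"] by (simp add: q_def inner_axis')
  have Mf: "M i j = s\<^sup>2 * A$i$j - s * p$j * q$i - s * p$i * q$j + p$i * p$j * c" for i j
    unfolding M_def W_def using Aij[of i j] pAj[of j]
    by (simp add: matrix_vector_mult_diff_distrib matrix_vector_mult_scaleR inner_diff_left inner_diff_right
        inner_axis' c_def q_def[symmetric] power2_eq_square algebra_simps)
  have Mle: "(M i j)\<^sup>2 \<le> M i i * M j j" for i j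
  proof -
    have "\<alpha>\<^sup>2 * M i i + 2*\<alpha>*\<beta>*M i j + \<beta>\<^sup>2 * M j j \<le> 0" for \<alpha> \<beta>
    proof -
      have "p \<bullet> (\<alpha> *\<^sub>R W i + \<beta> *\<^sub>R W j) = 0" using Wp by (simp add: inner_add_right)
      then have "(\<alpha> *\<^sub>R W i + \<beta> *\<^sub>R W j) \<bullet> (A *v (\<alpha> *\<^sub>R W i + \<beta> *\<^sub>R W j)) \<le> 0" by (rule nsd)
      then show ?thesis unfolding qf_comb[OF sym] M_def .
    qed
    then show ?thesis using quad2(2) by blast
  qed
  have S1: "(\<Sum>i\<in>UNIV. \<Sum>j\<in>UNIV. (M i j)\<^sup>2) \<le> (\<Sum>i\<in>UNIV. M i i)\<^sup>2"
  proof -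
    have "(\<Sum>i\<in>UNIV. \<Sum>j\<in>UNIV. (M i j)\<^sup>2) \<le> (\<Sum>i\<in>UNIV. \<Sum>j\<in>UNIV. M i i * M j j)"
      by (intro sum_mono Mle)
    also have "\<dots> = (\<Sum>i\<in>UNIV. M i i)\<^sup>2"
      by (simp add: power2_eq_square sum_product)
    finally show ?thesis .
  qed
  have trM: "(\<Sum>i\<in>UNIV. M i i) = s * (s * t - c)"
  proof -
    have "(\<Sum>i\<in>UNIV. M i i) = (\<Sum>i\<in>UNIV. s\<^sup>2 * A$i$i - 2 * s * (p$i * q$i) + c * (p$i)\<^sup>2)"
      by (rule sum.cong) (simp_all add: Mf power2_eq_square algebra_simps)
    also have "\<dots> = s\<^sup>2 * t - 2 * s * c + c * s"
      by (simp add: sum.distrib sum_subtractf sum_distrib_left[symmetric] t_def c_sum s_sum)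
    finally show ?thesis by (simp add: power2_eq_square algebra_simps)
  qed
  have sqexp: "(M i j)\<^sup>2 = s^4 * (A$i$j)\<^sup>2 + s\<^sup>2 * ((q$i)\<^sup>2 * (p$j)\<^sup>2) + s\<^sup>2 * ((p$i)\<^sup>2 * (q$j)\<^sup>2)
     + c\<^sup>2 * ((p$i)\<^sup>2 * (p$j)\<^sup>2) - 2 * s^3 * (A$i$j * p$j * q$i) - 2 * s^3 * (A$i$j * p$i * q$j)
     + 2 * s\<^sup>2 * c * (A$i$j * p$i * p$j) + 2 * s\<^sup>2 * ((p$i * q$i) * (p$j * q$j))
     - 2 * s * c * ((p$i * q$i) * (p$j)\<^sup>2) - 2 * s * c * ((p$i)\<^sup>2 * (p$j * q$j))" for i j
    unfolding Mf by algebra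
  have D1: "(\<Sum>i\<in>UNIV. \<Sum>j\<in>UNIV. s^4 * (A$i$j)\<^sup>2) = s^4 * F"
    by (simp add: F_def sum_distrib_left)
  have D2: "(\<Sum>i\<in>UNIV. \<Sum>j\<in>UNIV. s\<^sup>2 * ((q$i)\<^sup>2 * (p$j)\<^sup>2)) = s\<^sup>2 * (N * s)"
    using dsum[of "s\<^sup>2" "\<lambda>i. (q$i)\<^sup>2" "\<lambda>j. (p$j)\<^sup>2"] by (simp only: s_sum[symmetric] N_sum[symmetric] c_sum[symmetric])
  have D3: "(\<Sum>i\<in>UNIV. \<Sum>j\<in>UNIV. s\<^sup>2 * ((p$i)\<^sup>2 * (q$j)\<^sup>2)) = s\<^sup>2 * (s * N)"
    using dsum[of "s\<^sup>2" "\<lambda>i. (p$i)\<^sup>2" "\<lambda>j. (q$j)\<^sup>2"] by (simp only: s_sum[symmetric] N_sum[symmetric] c_sum[symmetric])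
  have D4: "(\<Sum>i\<in>UNIV. \<Sum>j\<in>UNIV. c\<^sup>2 * ((p$i)\<^sup>2 * (p$j)\<^sup>2)) = c\<^sup>2 * (s * s)"
    using dsum[of "c\<^sup>2" "\<lambda>i. (p$i)\<^sup>2" "\<lambda>j. (p$j)\<^sup>2"] by (simp only: s_sum[symmetric] N_sum[symmetric] c_sum[symmetric])
  have D5: "(\<Sum>i\<in>UNIV. \<Sum>j\<in>UNIV. 2 * s^3 * (A$i$j * p$j * q$i)) = 2 * s^3 * N"
  proof -
    have "(\<Sum>i\<in>UNIV. \<Sum>j\<in>UNIV. 2 * s^3 * (A$i$j * p$j * q$i)) = 2 * s^3 * (\<Sum>i\<in>UNIV. q$i * (\<Sum>j\<in>UNIV. A$i$j * p$j))"
      by (simp add: sum_distrib_left mult_ac)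
    then show ?thesis by (simp add: q_row N_sum power2_eq_square)
  qed
  have D6: "(\<Sum>i\<in>UNIV. \<Sum>j\<in>UNIV. 2 * s^3 * (A$i$j * p$i * q$j)) = 2 * s^3 * N"
  proof -
    have "(\<Sum>i\<in>UNIV. \<Sum>j\<in>UNIV. 2 * s^3 * (A$i$j * p$i * q$j)) = (\<Sum>j\<in>UNIV. \<Sum>i\<in>UNIV. 2 * s^3 * (A$i$j * p$i * q$j))"
      by (rule sum.swap)
    also have "\<dots> = 2 * s^3 * (\<Sum>j\<in>UNIV. q$j * (\<Sum>i\<in>UNIV. A$i$j * p$i))"
      by (simp add: sum_distrib_left mult_ac)
    finally show ?thesis by (simp add: q_col N_sum power2_eq_square)
  qed
  have D7: "(\<Sum>i\<in>UNIV. \<Sum>j\<in>UNIV. 2 * s\<^sup>2 * c * (A$i$j * p$i * p$j)) = 2 * s\<^sup>2 * c * c"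
  proof -
    have "(\<Sum>i\<in>UNIV. \<Sum>j\<in>UNIV. 2 * s\<^sup>2 * c * (A$i$j * p$i * p$j)) = 2 * s\<^sup>2 * c * (\<Sum>i\<in>UNIV. p$i * (\<Sum>j\<in>UNIV. A$i$j * p$j))"
      by (simp add: sum_distrib_left mult_ac)
    then show ?thesis by (simp add: q_row c_sum)
  qed
  have D8: "(\<Sum>i\<in>UNIV. \<Sum>j\<in>UNIV. 2 * s\<^sup>2 * ((p$i * q$i) * (p$j * q$j))) = 2 * s\<^sup>2 * (c * c)"
    using dsum[of "2 * s\<^sup>2" "\<lambda>i. p$i * q$i" "\<lambda>j. p$j * q$j"] by (simp only: s_sum[symmetric] N_sum[symmetric] c_sum[symmetric])
  have D9: "(\<Sum>i\<in>UNIV. \<Sum>j\<in>UNIV. 2 * s * c * ((p$i * q$i) * (p$j)\<^sup>2)) = 2 * s * c * (c * s)"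
    using dsum[of "2 * s * c" "\<lambda>i. p$i * q$i" "\<lambda>j. (p$j)\<^sup>2"] by (simp only: s_sum[symmetric] N_sum[symmetric] c_sum[symmetric])
  have D10: "(\<Sum>i\<in>UNIV. \<Sum>j\<in>UNIV. 2 * s * c * ((p$i)\<^sup>2 * (p$j * q$j))) = 2 * s * c * (s * c)"
    using dsum[of "2 * s * c" "\<lambda>i. (p$i)\<^sup>2" "\<lambda>j. p$j * q$j"] by (simp only: s_sum[symmetric] N_sum[symmetric] c_sum[symmetric])
  have sqM: "(\<Sum>i\<in>UNIV. \<Sum>j\<in>UNIV. (M i j)\<^sup>2) = s^4 * F - 2 * s^3 * N + s\<^sup>2 * c\<^sup>2"
  proof -
    have "(\<Sum>i\<in>UNIV. \<Sum>j\<in>UNIV. (M i j)\<^sup>2) =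
      (\<Sum>i\<in>UNIV. \<Sum>j\<in>UNIV. s^4 * (A$i$j)\<^sup>2) + (\<Sum>i\<in>UNIV. \<Sum>j\<in>UNIV. s\<^sup>2 * ((q$i)\<^sup>2 * (p$j)\<^sup>2))
      + (\<Sum>i\<in>UNIV. \<Sum>j\<in>UNIV. s\<^sup>2 * ((p$i)\<^sup>2 * (q$j)\<^sup>2))
      + (\<Sum>i\<in>UNIV. \<Sum>j\<in>UNIV. c\<^sup>2 * ((p$i)\<^sup>2 * (p$j)\<^sup>2))
      - (\<Sum>i\<in>UNIV. \<Sum>j\<in>UNIV. 2 * s^3 * (A$i$j * p$j * q$i))
      - (\<Sum>i\<in>UNIV. \<Sum>j\<in>UNIV. 2 * s^3 * (A$i$j * p$i * q$j))
      + (\<Sum>i\<in>UNIV. \<Sum>j\<in>UNIV. 2 * s\<^sup>2 * c * (A$i$j * p$i * p$j))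
      + (\<Sum>i\<in>UNIV. \<Sum>j\<in>UNIV. 2 * s\<^sup>2 * ((p$i * q$i) * (p$j * q$j)))
      - (\<Sum>i\<in>UNIV. \<Sum>j\<in>UNIV. 2 * s * c * ((p$i * q$i) * (p$j)\<^sup>2))
      - (\<Sum>i\<in>UNIV. \<Sum>j\<in>UNIV. 2 * s * c * ((p$i)\<^sup>2 * (p$j * q$j)))"
      by (simp only: sqexp sum.distrib sum_subtractf)
    also have "\<dots> = s^4 * F - 2 * s^3 * N + s\<^sup>2 * c\<^sup>2"
      unfolding D1 D2 D3 D4 D5 D6 D7 D8 D9 D10 by (simp add: power2_eq_square power3_eq_cube algebra_simps)
    finally show ?thesis .
  qed
  have key: "s^3 * (s * (F - t\<^sup>2) - 2 * (N - t * c)) \<le> 0"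
  proof -
    have "s^3 * (s * (F - t\<^sup>2) - 2 * (N - t * c)) =
       (\<Sum>i\<in>UNIV. \<Sum>j\<in>UNIV. (M i j)\<^sup>2) - (\<Sum>i\<in>UNIV. M i i)\<^sup>2"
      unfolding trM sqM by (simp add: power2_eq_square power3_eq_cube power4_eq_xxxx algebra_simps)
    then show ?thesis using S1 by simp
  qed
  have s0: "s \<ge> 0" by (simp add: s_def)
  show ?thesis
  proof (cases "s = 0")
    case True
    then have "p = 0" by (simp add: s_def)
    then show ?thesis by simp
  next
    case False
    then have "s > 0" using s0 by simp
    then have "s * (F - t\<^sup>2) - 2 * (N - t * c) \<le> 0" using key
      by (simp add: mult_le_0_iff)
    moreover have "(norm p)\<^sup>2 = s" "(norm (A *v p))\<^sup>2 = N" "(A *v p) \<bullet> p = c"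
      by (simp_all add: s_def N_def c_def q_def power2_norm_eq_inner inner_commute)
    ultimately show ?thesis unfolding t_def[symmetric] F_def[symmetric] by (simp add: algebra_simps)
  qed
qed



theorem lemma6p1:
  fixes v :: "real^'n \<Rightarrow> real" and U :: "(real^'n) set"
  assumes "CARD('n) \<ge> 2"
    and "continuous_on UNIV v"
    and "quasi_concave v"
    and "open U" and "connected U" and "U \<noteq> {}"
    and "smooth_on U v"
    and "x \<in> U"
  shows "2 * ((norm (hess v x *v grad v x))\<^sup>2 - laplacian v x * inf_laplacian v x)
         \<ge> (norm (grad v x))\<^sup>2 * (frob_norm_sq (hess v x) - (laplacian v x)\<^sup>2)"
proof -
  have "Ck_on (Suc (Suc 0)) U v" using assms(7) unfolding smooth_on_def by blast
  then have d1: "v differentiable_on U" and d2: "\<And>i. pd i v differentiable_on U" by simp_all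
  have dv: "\<forall>y\<in>U. v differentiable (at y)" using d1 assms(4) diff_on_open_at by blast
  have dpv: "\<forall>i. pd i v differentiable (at x)" using d2 assms(4,8) diff_on_open_at by blast
  have sym: "\<And>i j. hess v x $ i $ j = hess v x $ j $ i"
  proof -
    fix i j
    have "pd j (pd i v) x = pd i (pd j v) x" using young[OF assms(4,8) dv] dpv by blast
    then show "hess v x $ i $ j = hess v x $ j $ i" unfolding hess_def by simp
  qed
  have nsd': "\<And>w. grad v x \<bullet> w = 0 \<Longrightarrow> w \<bullet> (hess v x *v w) \<le> 0"
  proof -
    fix w assume "grad v x \<bullet> w = 0"
    from nsd[OF assms(3,4,8) dv dpv this] show "w \<bullet> (hess v x *v w) \<le> 0" unfolding qf_eq .
  qed
  show ?thesis
    using alg_main[OF sym nsd'] unfolding laplacian_def inf_laplacian_def frob_norm_sq_def .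
qed

end
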